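(* Let $q$ be a prime power, $1\le \ell\le m$, $V=\mathbb F_q^m$, and let $C(\ell,m)$, $\tau$, $n$ and $g(\cdot)$ be as defined below. Let $D$ be a subspace of $C(\ell,m)$ with $s=\dim D$, and let $\mathcal D=\tau^{-1}(D)\subseteq\bigwedge^{m-\ell}V$. Then $\mathcal E:=\{\omega'\in\bigwedge^{\ell}V:\omega'\wedge\omega=0\text{ for all }\omega\in\mathcal D\}$ is a subspace of $\bigwedge^{\ell}V$ of codimension $s$, and $\|D\|=n-g(\mathcal E)$.
   Context: Fix a basis $e_1,\dots,e_m$ of $V$ and identify $\bigwedge^mV$ with $\mathbb F_q$ via $e_1\wedge\cdots\wedge e_m=1$. Let $n=\left[{m\atop \ell}\right]_q$ be the number of $\ell$-dimensional subspaces of $V$, and fix representatives $\omega'_1,\dots,\omega'_n\in\bigwedge^{\ell}V$, where $\omega'_i=v_1\wedge\cdots\wedge v_\ell$ for a basis $v_1,\dots,v_\ell$ of the $i$-th $\ell$-dimensional subspace; let $T(\ell,m)=\{\omega'_1,\dots,\omega'_n\}$. $\tau:\bigwedge^{m-\ell}V\to\mathbb F_q^n$, $\tau(\omega)=(\omega'_1\wedge\omega,\dots,\omega'_n\wedge\omega)$, is injective, and $C(\ell,m)=\tau(\bigwedge^{m-\ell}V)$. For a subspace $\mathcal E$ of $\bigwedge^{\ell}V$, $g(\mathcal E)=|\mathcal E\cap T(\ell,m)|$. For $D\subseteq\mathbb F_q^n$, $\|D\|$ is the number of coordinates $i$ such that $x_i\ne0$ for some $x\in D$. *)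

theory Defs
  imports Complex_Main "HOL-Library.Function_Algebras"
begin

text \<open>Vectors of V = F_q^m are functions nat => F supported on {..<m};
  vectors of F_q^n likewise supported on {..<n};
  elements of the exterior algebra of V are functions (nat set => F),
  the value at I being the coefficient of e_I (I a subset of {..<m}).\<close>

definition fscale :: "'a::field \<Rightarrow> ('b \<Rightarrow> 'a) \<Rightarrow> ('b \<Rightarrow> 'a)" where
  "fscale c f = (\<lambda>x. c * f x)"

lemma vector_space_fscale: "vector_space (fscale :: 'a::field \<Rightarrow> ('b \<Rightarrow> 'a) \<Rightarrow> ('b \<Rightarrow> 'a))"
  unfolding vector_space_def fscale_def by (auto simp: algebra_simps fun_eq_iff)

text \<open>V = F^m (basis e_1..e_m is the standard basis, 0-indexed here).\<close>
definition Vsp :: "nat \<Rightarrow> (nat \<Rightarrow> 'a::field) set" where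
  "Vsp m = {v. \<forall>i. m \<le> i \<longrightarrow> v i = 0}"

definition ext_pow :: "nat \<Rightarrow> nat \<Rightarrow> (nat set \<Rightarrow> 'a::field) set" where
  "ext_pow m k = {w. \<forall>I. w I \<noteq> 0 \<longrightarrow> I \<subseteq> {..<m} \<and> card I = k}"

text \<open>Sign with e_I wedge e_J = ext_sign I J * e_(I union J) for disjoint I, J.\<close>
definition ext_sign :: "nat set \<Rightarrow> nat set \<Rightarrow> 'a::field" where
  "ext_sign I J = (-1) ^ card {(i, j). i \<in> I \<and> j \<in> J \<and> j < i}"

definition wedge :: "(nat set \<Rightarrow> 'a::field) \<Rightarrow> (nat set \<Rightarrow> 'a) \<Rightarrow> (nat set \<Rightarrow> 'a)" where
  "wedge \<alpha> \<beta> = (\<lambda>K. if finite K then (\<Sum>I\<in>Pow K. ext_sign I (K - I) * \<alpha> I * \<beta> (K - I)) else 0)"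

definition vec_ext :: "(nat \<Rightarrow> 'a::field) \<Rightarrow> (nat set \<Rightarrow> 'a)" where
  "vec_ext v = (\<lambda>I. if card I = 1 then v (the_elem I) else 0)"

fun wedge_list :: "(nat \<Rightarrow> 'a::field) list \<Rightarrow> (nat set \<Rightarrow> 'a)" where
  "wedge_list [] = (\<lambda>I. if I = {} then 1 else 0)"
| "wedge_list (v # vs) = wedge (vec_ext v) (wedge_list vs)"

text \<open>Identification of the top exterior power with F via e_1 wedge ... wedge e_m = 1.\<close>
definition top_coeff :: "nat \<Rightarrow> (nat set \<Rightarrow> 'a::field) \<Rightarrow> 'a" where
  "top_coeff m w = w {..<m}"

definition tau :: "nat \<Rightarrow> nat \<Rightarrow> (nat \<Rightarrow> nat set \<Rightarrow> 'a::field) \<Rightarrow> (nat set \<Rightarrow> 'a) \<Rightarrow> (nat \<Rightarrow> 'a)" where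
  "tau m n rep \<omega> = (\<lambda>i. if i < n then top_coeff m (wedge (rep i) \<omega>) else 0)"

definition supp_size :: "nat \<Rightarrow> (nat \<Rightarrow> 'a::zero) set \<Rightarrow> nat" where
  "supp_size n D = card {i \<in> {..<n}. \<exists>x\<in>D. x i \<noteq> 0}"

end

theory Submission
  imports Defs
begin


interpretation fs: vector_space "fscale :: 'a::field \<Rightarrow> ('b \<Rightarrow> 'a) \<Rightarrow> ('b \<Rightarrow> 'a)"
  by (rule vector_space_fscale)

lemma fscale_apply: "fscale c f x = c * f x" by (simp add: fscale_def)

lemma sum_fun_apply: "(sum f A) x = (\<Sum>a\<in>A. f a x)"
  by (induction A rule: infinite_finite_induct) auto

definition lin :: "(('b \<Rightarrow> 'a::field) \<Rightarrow> ('c \<Rightarrow> 'a)) \<Rightarrow> bool" where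
  "lin f \<longleftrightarrow> (\<forall>x y. f (x+y) = f x + f y) \<and> (\<forall>c x. f (fscale c x) = fscale c (f x))"

lemma lin_hom: "lin f \<Longrightarrow> module_hom fscale fscale f"
  unfolding lin_def module_hom_iff by (simp add: fs.module_axioms)

lemma span_inter_zero:
  assumes "fs.independent B" "C \<subseteq> B" "K \<subseteq> B" "C \<inter> K = {}" "x \<in> fs.span C" "x \<in> fs.span K"
  shows "x = 0"
proof -
  have r1: "fs.representation B x = fs.representation C x"
    by (rule fs.representation_extend) (use assms in auto)
  have r2: "fs.representation B x = fs.representation K x"
    by (rule fs.representation_extend) (use assms in auto)
  have z: "\<forall>b. fs.representation B x b = 0"
  proof
    fix b show "fs.representation B x b = 0"
    proof (rule ccontr)
      assume "fs.representation B x b \<noteq> 0"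
      then have "b \<in> C" "b \<in> K" using r1 r2 fs.representation_ne_zero by metis+
      then show False using assms(4) by auto
    qed
  qed
  have "x \<in> fs.span B" using assms(2,5) fs.span_mono by blast
  then have "x = (\<Sum>b | fs.representation B x b \<noteq> 0. fscale (fs.representation B x b) b)"
    using fs.sum_nonzero_representation_eq[OF assms(1)] by simp
  then show ?thesis using z by simp
qed

lemma rank_nullity:
  fixes f :: "('b \<Rightarrow> 'a::field) \<Rightarrow> ('c \<Rightarrow> 'a)"
  assumes f: "lin f" and S: "fs.subspace S" and B: "finite B" "S \<subseteq> fs.span B"
  shows "fs.dim S = fs.dim {x\<in>S. f x = 0} + fs.dim (f ` S)"
proof -
  interpret h: module_hom fscale fscale f by (rule lin_hom[OF f])
  define K where "K = {x\<in>S. f x = 0}"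
  obtain BK where BK: "BK \<subseteq> K" "fs.independent BK" "K \<subseteq> fs.span BK" "card BK = fs.dim K"
    by (rule fs.basis_exists)
  have "BK \<subseteq> S" using BK(1) K_def by auto
  obtain BS where BS: "BK \<subseteq> BS" "BS \<subseteq> S" "fs.independent BS" "S \<subseteq> fs.span BS"
    using fs.maximal_independent_subset_extend[OF \<open>BK \<subseteq> S\<close> BK(2)] by blast
  have finBS: "finite BS" using fs.independent_span_bound[OF B(1) BS(3)] BS(2) B(2) by auto
  have dimS: "fs.dim S = card BS" using fs.basis_card_eq_dim[OF BS(2) BS(4) BS(3)] by simp
  define C where "C = BS - BK"
  have finBK: "finite BK" using finBS BS(1) finite_subset by blast
  have cardBS: "card BS = card BK + card C"
    using finBS BS(1) C_def card_Diff_subset[OF finBK BS(1)] card_mono[OF finBS BS(1)] by simp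
  have spanC: "fs.span C \<subseteq> S" using fs.span_minimal[of C S] S BS(2) C_def by auto
  have inj: "inj_on f (fs.span C)"
    unfolding h.inj_on_iff_eq_0[OF fs.subspace_span]
  proof safe
    fix x assume x: "x \<in> fs.span C" "f x = 0"
    then have "x \<in> K" using spanC K_def by auto
    then have "x \<in> fs.span BK" using BK(3) by auto
    then show "x = 0" using span_inter_zero[OF BS(3), of C BK x] x C_def BS(1) by auto
  qed
  have fS: "f ` S = fs.span (f ` C)"
  proof
    have "f ` S \<subseteq> f ` fs.span BS" using BS(4) by (rule image_mono)
    also have "\<dots> = fs.span (f ` BS)" by (rule h.span_image[symmetric])
    also have "\<dots> \<subseteq> fs.span (f ` C)"
    proof (rule fs.span_minimal)
      show "f ` BS \<subseteq> fs.span (f ` C)"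
      proof
        fix y assume "y \<in> f ` BS" then obtain b where b: "b \<in> BS" "y = f b" by auto
        show "y \<in> fs.span (f ` C)"
        proof (cases "b \<in> BK")
          case True then have "f b = 0" using BK(1) K_def by auto
          then show ?thesis using b fs.span_zero by simp
        next
          case False then have "b \<in> C" using b(1) unfolding C_def by simp
          then have "f b \<in> f ` C" by (rule imageI)
          then show ?thesis using b(2) fs.span_base by metis
        qed
      qed
    qed simp
    finally show "f ` S \<subseteq> fs.span (f ` C)" .
  next
    have "fs.span (f ` C) = f ` fs.span C" by (rule h.span_image)
    also have "\<dots> \<subseteq> f ` S" using spanC by (rule image_mono)
    finally show "fs.span (f ` C) \<subseteq> f ` S" .
  qed
  have indC: "fs.independent C" using BS(3) C_def fs.independent_mono by blast
  have indfC: "fs.independent (f ` C)" by (rule h.independent_injective_image[OF indC inj])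
  have cardfC: "card (f ` C) = card C"
    using card_image inj_on_subset[OF inj fs.span_superset] by blast
  have "fs.dim (f ` S) = card C"
    using fS fs.dim_span fs.dim_eq_card_independent[OF indfC] cardfC by metis
  then show ?thesis using dimS cardBS BK(4) K_def by simp
qed

definition coord :: "'b set \<Rightarrow> ('b \<Rightarrow> 'a::field) set" where
  "coord X = {v. \<forall>i. v i \<noteq> 0 \<longrightarrow> i \<in> X}"

definition unitv :: "'b \<Rightarrow> ('b \<Rightarrow> 'a::field)" where
  "unitv j = (\<lambda>i. if i = j then 1 else 0)"

lemma unitv_inj: "inj (unitv :: 'b \<Rightarrow> ('b \<Rightarrow> 'a::field))"
  unfolding inj_def unitv_def by (metis one_neq_zero)

lemma subspace_coord: "fs.subspace (coord X)"
  unfolding fs.subspace_def coord_def by (auto simp: fscale_apply, metis add.right_neutral)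

lemma coord_eq_sum:
  assumes "finite X" "v \<in> coord X"
  shows "v = (\<Sum>j\<in>X. fscale (v j) (unitv j))"
proof
  fix i
  have "(\<Sum>j\<in>X. fscale (v j) (unitv j)) i = (\<Sum>j\<in>X. if j = i then v i else 0)"
    unfolding sum_fun_apply by (rule sum.cong) (auto simp: unitv_def fscale_apply)
  also have "\<dots> = v i" using assms by (auto simp: coord_def)
  finally show "v i = (\<Sum>j\<in>X. fscale (v j) (unitv j)) i" by simp
qed

lemma coord_span:
  fixes X :: "'i set"
  assumes X: "finite X"
  shows "(coord X :: ('i \<Rightarrow> 'k::field) set) = fs.span (unitv ` X)"
proof
  show "(coord X :: ('i \<Rightarrow> 'k::field) set) \<subseteq> fs.span (unitv ` X)"
  proof
    fix v :: "'i \<Rightarrow> 'k" assume "v \<in> coord X"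
    then have e: "v = (\<Sum>j\<in>X. fscale (v j) (unitv j))" using coord_eq_sum X by blast
    have "(\<Sum>j\<in>X. fscale (v j) (unitv j)) \<in> fs.span (unitv ` X)"
      by (intro fs.span_sum fs.span_scale fs.span_base) auto
    then show "v \<in> fs.span (unitv ` X)" using e by simp
  qed
  show "fs.span (unitv ` X) \<subseteq> (coord X :: ('i \<Rightarrow> 'k::field) set)"
  proof (rule fs.span_minimal)
    show "unitv ` X \<subseteq> (coord X :: ('i \<Rightarrow> 'k::field) set)"
      by (auto simp: coord_def unitv_def split: if_splits)
    show "fs.subspace (coord X :: ('i \<Rightarrow> 'k::field) set)" by (rule subspace_coord)
  qed
qed

lemma unitv_indep:
  fixes X :: "'i set"
  shows "fs.independent (unitv ` X :: ('i \<Rightarrow> 'k::field) set)"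
  unfolding fs.dependent_def
proof clarify
  fix j assume j: "j \<in> X" and sp: "(unitv j :: 'i \<Rightarrow> 'k) \<in> fs.span (unitv ` X - {unitv j})"
  have "fs.span (unitv ` X - {unitv j}) \<subseteq> {v :: 'i \<Rightarrow> 'k. v j = 0}"
  proof (rule fs.span_minimal)
    show "unitv ` X - {unitv j} \<subseteq> {v :: 'i \<Rightarrow> 'k. v j = 0}"
    proof clarify
      fix x assume "x \<in> X" "(unitv x :: 'i \<Rightarrow> 'k) \<noteq> unitv j"
      then have "x \<noteq> j" by auto
      then show "(unitv x :: 'i \<Rightarrow> 'k) j = 0" by (simp add: unitv_def)
    qed
    show "fs.subspace {v :: 'i \<Rightarrow> 'k. v j = 0}" by (simp add: fs.subspace_def fscale_apply)
  qed
  note subsetD[OF this sp]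
  then show False by (simp add: unitv_def)
qed

lemma dim_coord:
  fixes X :: "'i set"
  assumes "finite X"
  shows "fs.dim (coord X :: ('i \<Rightarrow> 'k::field) set) = card X"
proof -
  have "fs.dim (coord X :: ('i \<Rightarrow> 'k::field) set) = fs.dim (unitv ` X :: ('i \<Rightarrow> 'k::field) set)"
    unfolding coord_span[OF assms] by (rule fs.dim_span)
  also have "\<dots> = card (unitv ` X :: ('i \<Rightarrow> 'k::field) set)"
    by (rule fs.dim_eq_card_independent[OF unitv_indep])
  also have "\<dots> = card X" by (rule card_image[OF inj_on_subset[OF unitv_inj subset_UNIV]])
  finally show ?thesis .
qed

lemma duality:
  fixes p :: "('b \<Rightarrow> 'a::field) \<Rightarrow> ('c \<Rightarrow> 'a) \<Rightarrow> 'a"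
    and U :: "('b \<Rightarrow> 'a) set" and Z BY :: "('c \<Rightarrow> 'a) set"
  assumes U: "finite U"
    and pl1: "\<And>x1 x2 y. p (x1 + x2) y = p x1 y + p x2 y"
    and pl2: "\<And>c x y. p (fscale c x) y = c * p x y"
    and pr1: "\<And>x y1 y2. p x (y1 + y2) = p x y1 + p x y2"
    and pr2: "\<And>c x y. p x (fscale c y) = c * p x y"
    and Z: "fs.subspace Z" "finite BY" "Z \<subseteq> fs.span BY"
    and nd: "\<And>y. y \<in> Z \<Longrightarrow> (\<forall>u\<in>U. p u y = 0) \<Longrightarrow> y = 0"
  shows "fs.dim (fs.span U) = fs.dim Z + fs.dim {x\<in>fs.span U. \<forall>z\<in>Z. p x z = 0}"
proof -
  obtain BZ where BZ: "BZ \<subseteq> Z" "fs.independent BZ" "Z \<subseteq> fs.span BZ" "card BZ = fs.dim Z"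
    by (rule fs.basis_exists)
  have finBZ: "finite BZ" using fs.independent_span_bound[OF Z(2) BZ(2)] BZ(1) Z(3) by blast
  have spBZ: "fs.span BZ \<subseteq> Z" using fs.span_minimal[OF BZ(1) Z(1)] .
  define g :: "('b \<Rightarrow> 'a) \<Rightarrow> (('c \<Rightarrow> 'a) \<Rightarrow> 'a)" where
    "g x = (\<lambda>z. if z \<in> BZ then p x z else 0)" for x
  have lg: "lin g" unfolding lin_def g_def by (auto simp: pl1 pl2 fun_eq_iff fscale_apply)
  have p0: "p x 0 = 0" for x using pr2[where c=0 and x=x and y=0] by (simp add: fscale_def zero_fun_def)
  have RN: "fs.dim (fs.span U) = fs.dim {x\<in>fs.span U. g x = 0} + fs.dim (g ` fs.span U)"
    by (rule rank_nullity[OF lg fs.subspace_span U order_refl])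
  have ker: "{x\<in>fs.span U. g x = 0} = {x\<in>fs.span U. \<forall>z\<in>Z. p x z = 0}"
  proof (intro Collect_cong conj_cong refl)
    fix x
    show "(g x = 0) = (\<forall>z\<in>Z. p x z = 0)"
    proof
      assume "g x = 0"
      then have h: "\<forall>z\<in>BZ. p x z = 0" unfolding g_def by (metis (mono_tags) zero_fun_def)
      have "fs.span BZ \<subseteq> {y. p x y = 0}"
        by (rule fs.span_minimal) (use h in \<open>auto simp: fs.subspace_def pr1 pr2 p0\<close>)
      then show "\<forall>z\<in>Z. p x z = 0" using BZ(3) by blast
    next
      assume "\<forall>z\<in>Z. p x z = 0"
      then show "g x = 0" using BZ(1) unfolding g_def by (auto simp: fun_eq_iff)
    qed
  qed
  have le: "fs.dim (g ` fs.span U) \<le> card BZ"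
  proof -
    have "g ` fs.span U \<subseteq> coord BZ" by (auto simp: g_def coord_def split: if_splits)
    also have "\<dots> = fs.span (unitv ` BZ)" by (rule coord_span[OF finBZ])
    finally have "fs.dim (g ` fs.span U) \<le> card (unitv ` BZ :: (('c \<Rightarrow> 'a) \<Rightarrow> 'a) set)"
      using fs.dim_le_card finite_imageI[OF finBZ] by blast
    also have "\<dots> \<le> card BZ" by (rule card_image_le[OF finBZ])
    finally show ?thesis .
  qed
  define G where "G = g ` fs.span U"
  obtain D where D: "D \<subseteq> G" "fs.independent D" "G \<subseteq> fs.span D" "card D = fs.dim G"
    by (rule fs.basis_exists)
  have GC: "G \<subseteq> fs.span (unitv ` BZ)"
    using coord_span[OF finBZ] by (auto simp: G_def g_def coord_def split: if_splits)
  have finD: "finite D"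
    using fs.independent_span_bound[OF finite_imageI[OF finBZ] D(2)] D(1) GC by blast
  define \<alpha> where "\<alpha> u d = fs.representation D (g u) d" for u d
  have gu: "g u = (\<Sum>d\<in>D. fscale (\<alpha> u d) d)" if "u \<in> U" for u
  proof -
    have "g u \<in> G" unfolding G_def using that fs.span_base by blast
    then have "g u \<in> fs.span D" using D(3) by blast
    then show ?thesis unfolding \<alpha>_def
      using fs.sum_representation_eq[OF D(2) _ finD order_refl] by simp
  qed
  define \<alpha>v :: "(('c \<Rightarrow> 'a) \<Rightarrow> 'a) \<Rightarrow> (('b \<Rightarrow> 'a) \<Rightarrow> 'a)" where
    "\<alpha>v d = (\<lambda>u. if u \<in> U then \<alpha> u d else 0)" for d
  define \<Psi> :: "('c \<Rightarrow> 'a) \<Rightarrow> (('b \<Rightarrow> 'a) \<Rightarrow> 'a)" where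
    "\<Psi> y = (\<lambda>u. if u \<in> U then p u y else 0)" for y
  have l\<Psi>: "lin \<Psi>" unfolding lin_def \<Psi>_def by (auto simp: pr1 pr2 fun_eq_iff fscale_apply)
  interpret h: module_hom fscale fscale \<Psi> by (rule lin_hom[OF l\<Psi>])
  have \<Psi>sp: "\<Psi> z = (\<Sum>d\<in>D. fscale (d z) (\<alpha>v d))" if "z \<in> BZ" for z
  proof
    fix u
    show "\<Psi> z u = (\<Sum>d\<in>D. fscale (d z) (\<alpha>v d)) u"
    proof (cases "u \<in> U")
      case True
      have "p u z = g u z" using that by (simp add: g_def)
      also have "\<dots> = (\<Sum>d\<in>D. \<alpha> u d * d z)" using gu[OF True] by (simp add: sum_fun_apply fscale_apply)
      finally show ?thesis using True by (simp add: \<Psi>_def \<alpha>v_def sum_fun_apply mult.commute fscale_apply)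
    next
      case False
      then show ?thesis by (simp add: \<Psi>_def \<alpha>v_def sum_fun_apply fscale_apply)
    qed
  qed
  have sub: "\<Psi> ` BZ \<subseteq> fs.span (\<alpha>v ` D)"
  proof
    fix w assume "w \<in> \<Psi> ` BZ"
    then obtain z where z: "z \<in> BZ" "w = \<Psi> z" by blast
    have "(\<Sum>d\<in>D. fscale (d z) (\<alpha>v d)) \<in> fs.span (\<alpha>v ` D)"
      by (intro fs.span_sum fs.span_scale fs.span_base) auto
    then show "w \<in> fs.span (\<alpha>v ` D)" using z \<Psi>sp by simp
  qed
  have inj: "inj_on \<Psi> (fs.span BZ)"
    unfolding h.inj_on_iff_eq_0[OF fs.subspace_span]
  proof safe
    fix y assume y: "y \<in> fs.span BZ" "\<Psi> y = 0"
    have "y \<in> Z" using y(1) spBZ by blast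
    moreover have "\<forall>u\<in>U. p u y = 0"
    proof
      fix u assume "u \<in> U"
      then have "\<Psi> y u = p u y" by (simp add: \<Psi>_def)
      then show "p u y = 0" using y(2) by simp
    qed
    ultimately show "y = 0" by (rule nd)
  qed
  have ind: "fs.independent (\<Psi> ` BZ)" by (rule h.independent_injective_image[OF BZ(2) inj])
  have c1: "card (\<Psi> ` BZ) = card BZ"
    by (rule card_image[OF inj_on_subset[OF inj fs.span_superset]])
  have "card (\<Psi> ` BZ) \<le> card (\<alpha>v ` D)"
    using fs.independent_span_bound[OF finite_imageI[OF finD] ind sub] by blast
  also have "\<dots> \<le> card D" by (rule card_image_le[OF finD])
  finally have ge: "card BZ \<le> fs.dim G" using c1 D(4) by simp
  show ?thesis using RN ker le ge BZ(4) G_def by simp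
qed



lemma wedge_add_l: "wedge (a + b) c = wedge a c + wedge b c"
  by (auto simp: wedge_def fun_eq_iff sum.distrib[symmetric] algebra_simps)
lemma wedge_add_r: "wedge a (b + c) = wedge a b + wedge a c"
  by (auto simp: wedge_def fun_eq_iff sum.distrib[symmetric] algebra_simps)
lemma wedge_scale_l: "wedge (fscale k a) c = fscale k (wedge a c)"
  by (auto simp: wedge_def fun_eq_iff sum_distrib_left algebra_simps fscale_apply)
lemma wedge_scale_r: "wedge a (fscale k c) = fscale k (wedge a c)"
  by (auto simp: wedge_def fun_eq_iff sum_distrib_left algebra_simps fscale_apply)
lemma wedge_zero_r: "wedge a 0 = 0"
  by (auto simp: wedge_def fun_eq_iff)
lemma wedge_neg_r: "wedge a (- b) = - wedge a b"
  by (auto simp: wedge_def fun_eq_iff sum_negf[symmetric])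
lemma vec_ext_add: "vec_ext (u + v) = vec_ext u + vec_ext v"
  by (auto simp: vec_ext_def fun_eq_iff fscale_apply)
lemma vec_ext_scale: "vec_ext (fscale k u) = fscale k (vec_ext u)"
  by (auto simp: vec_ext_def fun_eq_iff fscale_apply)

definition sg :: "nat \<Rightarrow> nat set \<Rightarrow> 'a::field" where
  "sg j K = (-1) ^ card {x\<in>K. x < j}"

lemma sg_sq: "sg j K * sg j K = 1"
  by (simp add: sg_def power_mult_distrib[symmetric])

lemma sg_nz: "sg j K \<noteq> 0"
  by (simp add: sg_def)

lemma ext_sign_single: "ext_sign {j} (K - {j}) = sg j K"
proof -
  have "{(i, x). i \<in> {j} \<and> x \<in> K - {j} \<and> x < i} = (\<lambda>x. (j, x)) ` {x\<in>K. x < j}"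
    by auto
  then have "card {(i, x). i \<in> {j} \<and> x \<in> K - {j} \<and> x < i} = card {x\<in>K. x < j}"
    by (simp add: card_image inj_on_def)
  then show ?thesis by (simp add: ext_sign_def sg_def)
qed

lemma wedge_vec:
  "wedge (vec_ext v) \<beta> K = (if finite K then (\<Sum>j\<in>K. sg j K * v j * \<beta> (K - {j})) else 0)"
proof (cases "finite K")
  case True
  have "(\<Sum>I\<in>Pow K. ext_sign I (K - I) * vec_ext v I * \<beta> (K - I))
      = (\<Sum>I\<in>(\<lambda>j. {j}) ` K. ext_sign I (K - I) * vec_ext v I * \<beta> (K - I))"
  proof (rule sum.mono_neutral_right)
    show "finite (Pow K)" using True by simp
    show "(\<lambda>j. {j}) ` K \<subseteq> Pow K" by auto
    show "\<forall>I\<in>Pow K - (\<lambda>j. {j}) ` K. ext_sign I (K - I) * vec_ext v I * \<beta> (K - I) = 0"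
    proof
      fix I assume I: "I \<in> Pow K - (\<lambda>j. {j}) ` K"
      have "card I \<noteq> 1"
      proof
        assume "card I = 1"
        then obtain j where "I = {j}" by (auto simp: card_Suc_eq)
        then show False using I by auto
      qed
      then show "ext_sign I (K - I) * vec_ext v I * \<beta> (K - I) = 0" by (simp add: vec_ext_def)
    qed
  qed
  also have "\<dots> = (\<Sum>j\<in>K. ext_sign {j} (K - {j}) * vec_ext v {j} * \<beta> (K - {j}))"
    by (rule sum.reindex_cong[where l = "\<lambda>j. {j}"]) (auto simp: inj_on_def)
  also have "\<dots> = (\<Sum>j\<in>K. sg j K * v j * \<beta> (K - {j}))"
    by (simp add: ext_sign_single vec_ext_def)
  finally show ?thesis using True by (simp add: wedge_def)
qed (simp add: wedge_def)

lemma card_less_remove: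
  assumes "finite K" "i \<in> K" "i \<noteq> j"
  shows "card {x\<in>K. x < j} = card {x\<in>K - {i}. x < j} + (if i < j then 1 else 0)"
proof (cases "i < j")
  case True
  have "{x\<in>K. x < j} = insert i {x\<in>K - {i}. x < j}" using True assms by auto
  then show ?thesis using True assms by simp
next
  case False
  have "{x\<in>K. x < j} = {x\<in>K - {i}. x < j}" using False assms by auto
  then show ?thesis using False by simp
qed

lemma sg_remove:
  assumes "finite K" "i \<in> K" "i \<noteq> j"
  shows "sg j (K - {i}) = (if i < j then -1 else 1) * (sg j K :: 'a::field)"
  using card_less_remove[OF assms] by (simp add: sg_def)

lemma antisym_double_sum:
  fixes G :: "nat \<Rightarrow> nat \<Rightarrow> 'a::field"
  assumes "finite K" "\<And>i j. i \<in> K \<Longrightarrow> j \<in> K \<Longrightarrow> i \<noteq> j \<Longrightarrow> G j i = - G i j"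
  shows "(\<Sum>i\<in>K. \<Sum>j\<in>K. if i \<noteq> j then G i j else 0) = 0"
proof -
  have A: "(\<Sum>i\<in>K. \<Sum>j\<in>K. if i \<noteq> j then G i j else 0)
      = (\<Sum>i\<in>K. \<Sum>j\<in>K. if i < j then G i j else 0) + (\<Sum>i\<in>K. \<Sum>j\<in>K. if j < i then G i j else 0)"
    unfolding sum.distrib[symmetric] by (intro sum.cong refl) (auto simp: linorder_neq_iff)
  have B: "(\<Sum>i\<in>K. \<Sum>j\<in>K. if j < i then G i j else 0) = (\<Sum>i\<in>K. \<Sum>j\<in>K. if i < j then G j i else 0)"
    by (subst sum.swap) simp
  have C: "(\<Sum>i\<in>K. \<Sum>j\<in>K. if i < j then G j i else 0) = (\<Sum>i\<in>K. \<Sum>j\<in>K. - (if i < j then G i j else 0))"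
  proof (intro sum.cong refl)
    fix i j assume ij: "i \<in> K" "j \<in> K"
    show "(if i < j then G j i else 0) = - (if i < j then G i j else 0)"
    proof (cases "i < j")
      case True
      then have "G j i = - G i j" using assms(2)[OF ij] by simp
      then show ?thesis using True by simp
    qed simp
  qed
  show ?thesis unfolding A B C sum_negf by simp
qed

lemma double_wedge:
  assumes "finite K"
  shows "wedge (vec_ext u) (wedge (vec_ext v) \<beta>) K =
     (\<Sum>i\<in>K. \<Sum>j\<in>K. if i \<noteq> j then u i * v j * (sg i K * sg j (K - {i}) * \<beta> (K - {i} - {j})) else 0)"
proof -
  have "wedge (vec_ext u) (wedge (vec_ext v) \<beta>) K =
     (\<Sum>i\<in>K. sg i K * u i * (\<Sum>j\<in>K - {i}. sg j (K - {i}) * v j * \<beta> (K - {i} - {j})))"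
    using assms by (simp add: wedge_vec)
  also have "\<dots> = (\<Sum>i\<in>K. \<Sum>j\<in>K. if i \<noteq> j then u i * v j * (sg i K * sg j (K - {i}) * \<beta> (K - {i} - {j})) else 0)"
  proof (rule sum.cong[OF refl])
    fix i assume i: "i \<in> K"
    have "sg i K * u i * (\<Sum>j\<in>K - {i}. sg j (K - {i}) * v j * \<beta> (K - {i} - {j}))
        = (\<Sum>j\<in>K - {i}. u i * v j * (sg i K * sg j (K - {i}) * \<beta> (K - {i} - {j})))"
      by (simp add: sum_distrib_left algebra_simps)
    also have "\<dots> = (\<Sum>j\<in>K. if i \<noteq> j then u i * v j * (sg i K * sg j (K - {i}) * \<beta> (K - {i} - {j})) else 0)"
      using assms by (intro sum.mono_neutral_cong_right[symmetric]) auto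
    finally show "sg i K * u i * (\<Sum>j\<in>K - {i}. sg j (K - {i}) * v j * \<beta> (K - {i} - {j}))
        = (\<Sum>j\<in>K. if i \<noteq> j then u i * v j * (sg i K * sg j (K - {i}) * \<beta> (K - {i} - {j})) else 0)" .
  qed
  finally show ?thesis .
qed

lemma F_antisym:
  assumes "finite K" "i \<in> K" "j \<in> K" "i \<noteq> j"
  shows "sg j K * sg i (K - {j}) * \<beta> (K - {j} - {i}) = - (sg i K * sg j (K - {i}) * (\<beta> (K - {i} - {j}) :: 'a::field))"
proof -
  have e: "K - {j} - {i} = K - {i} - {j}" by auto
  show ?thesis using sg_remove[OF assms(1,2,4), where 'a='a] sg_remove[OF assms(1,3), of i, where 'a='a] assms(4)
    unfolding e by (auto simp: linorder_neq_iff)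
qed

lemma wedge_anti: "wedge (vec_ext u) (wedge (vec_ext v) \<beta>) = - wedge (vec_ext v) (wedge (vec_ext u) \<beta>)"
proof
  fix K
  show "wedge (vec_ext u) (wedge (vec_ext v) \<beta>) K = (- wedge (vec_ext v) (wedge (vec_ext u) \<beta>)) K"
  proof (cases "finite K")
    case True
    let ?F = "\<lambda>i j. sg i K * sg j (K - {i}) * \<beta> (K - {i} - {j})"
    have "(\<Sum>i\<in>K. \<Sum>j\<in>K. if i \<noteq> j then (u i * v j + v i * u j) * ?F i j else 0) = 0"
      by (rule antisym_double_sum[OF True]) (simp only: F_antisym[OF True], simp add: algebra_simps)
    moreover have "(\<Sum>i\<in>K. \<Sum>j\<in>K. if i \<noteq> j then (u i * v j + v i * u j) * ?F i j else 0) =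
       (\<Sum>i\<in>K. \<Sum>j\<in>K. if i \<noteq> j then u i * v j * ?F i j else 0)
        + (\<Sum>i\<in>K. \<Sum>j\<in>K. if i \<noteq> j then v i * u j * ?F i j else 0)"
      unfolding sum.distrib[symmetric] by (intro sum.cong refl) (simp add: distrib_right)
    ultimately have "(\<Sum>i\<in>K. \<Sum>j\<in>K. if i \<noteq> j then u i * v j * ?F i j else 0)
        + (\<Sum>i\<in>K. \<Sum>j\<in>K. if i \<noteq> j then v i * u j * ?F i j else 0) = 0" by simp
    then show ?thesis using True by (simp add: double_wedge eq_neg_iff_add_eq_0)
  qed (simp add: wedge_def)
qed

lemma wedge_self: "wedge (vec_ext v) (wedge (vec_ext v) \<beta>) = 0"
proof
  fix K
  show "wedge (vec_ext v) (wedge (vec_ext v) \<beta>) K = 0 K"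
  proof (cases "finite K")
    case True
    let ?F = "\<lambda>i j. sg i K * sg j (K - {i}) * \<beta> (K - {i} - {j})"
    have "(\<Sum>i\<in>K. \<Sum>j\<in>K. if i \<noteq> j then v i * v j * ?F i j else 0) = 0"
      by (rule antisym_double_sum[OF True]) (simp only: F_antisym[OF True], simp add: algebra_simps)
    then show ?thesis using True by (simp add: double_wedge)
  qed (simp add: wedge_def)
qed



lemma vec_ext_zero: "vec_ext 0 = 0" by (auto simp: vec_ext_def fun_eq_iff)
lemma wedge_zero_l: "wedge 0 b = 0" by (auto simp: wedge_def fun_eq_iff)

lemma wedge_zero_r2[simp]: "wedge a (\<lambda>c. 0) = (\<lambda>c. 0)"
  using wedge_zero_r by (simp add: zero_fun_def)
lemma wedge_neg_r2[simp]: "wedge a (\<lambda>c. - b c) = (\<lambda>c. - wedge a b c)"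
  using wedge_neg_r[of a b] by (simp add: fun_Compl_def)

lemma wl_swap: "wedge_list (xs @ a # b # ys) = - wedge_list (xs @ b # a # ys)"
proof (induction xs)
  case Nil
  show ?case by (simp only: append.simps wedge_list.simps) (rule wedge_anti)
next
  case (Cons x xs)
  then show ?case by (simp add: wedge_neg_r)
qed

lemma wl_mem_zero: "v \<in> set ws \<Longrightarrow> wedge_list (v # ws) = 0"
proof (induction ws)
  case (Cons w ws)
  show ?case
  proof (cases "v = w")
    case True then show ?thesis by (simp add: wedge_self)
  next
    case False
    then have vws: "v \<in> set ws" using Cons.prems by simp
    have "wedge_list (v # w # ws) = - wedge_list (w # v # ws)" using wl_swap[of "[]" v w ws] by simp
    also have "\<dots> = 0" using Cons.IH[OF vws] by (simp add: wedge_zero_r zero_fun_def)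
    finally show ?thesis .
  qed
qed simp

lemma wl_nondistinct: "\<not> distinct vs \<Longrightarrow> wedge_list vs = 0"
  by (induction vs) (auto simp: wl_mem_zero[simplified] wedge_zero_r)

lemma wl_append_zero: "wedge_list vs = 0 \<Longrightarrow> wedge_list (us @ vs) = 0"
  by (induction us) (auto simp: wedge_zero_r)

lemma lin_wedge_vec: "lin (\<lambda>v. wedge (vec_ext v) \<beta>)"
  unfolding lin_def by (simp add: vec_ext_add vec_ext_scale wedge_add_l wedge_scale_l)

lemma lin_wedge_r: "lin (\<lambda>\<beta>. wedge \<alpha> \<beta>)"
  unfolding lin_def by (simp add: wedge_add_r wedge_scale_r)

lemma wl_span_zero:
  assumes v: "v \<in> fs.span (set ws)"
  shows "wedge_list (v # ws) = 0"
proof -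
  have "fs.span (set ws) \<subseteq> {v. wedge (vec_ext v) (wedge_list ws) = 0}"
  proof (rule fs.span_minimal)
    show "set ws \<subseteq> {v. wedge (vec_ext v) (wedge_list ws) = 0}" using wl_mem_zero by auto
    show "fs.subspace {v. wedge (vec_ext v) (wedge_list ws) = 0}"
      by (rule module_hom.subspace_kernel[OF lin_hom[OF lin_wedge_vec]])
  qed
  then show ?thesis using v by auto
qed

lemma wl_move:
  "wedge_list (xs @ z # ys) = wedge_list (z # xs @ ys) \<or> wedge_list (xs @ z # ys) = - wedge_list (z # xs @ ys)"
proof (induction xs)
  case Nil then show ?case by simp
next
  case (Cons x xs)
  have sw: "wedge_list (x # z # xs @ ys) = - wedge_list (z # x # xs @ ys)"
    using wl_swap[of "[]" x z "xs @ ys"] by simp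
  from Cons.IH show ?case
  proof
    assume h: "wedge_list (xs @ z # ys) = wedge_list (z # xs @ ys)"
    have "wedge_list ((x # xs) @ z # ys) = wedge_list (x # z # xs @ ys)" using h by simp
    then show ?thesis using sw by simp
  next
    assume h: "wedge_list (xs @ z # ys) = - wedge_list (z # xs @ ys)"
    have "wedge_list ((x # xs) @ z # ys) = - wedge_list (x # z # xs @ ys)" using h by (simp add: wedge_neg_r)
    then show ?thesis using sw by simp
  qed
qed

lemma wl_perm:
  "distinct ys \<Longrightarrow> distinct zs \<Longrightarrow> set ys = set zs \<Longrightarrow>
   wedge_list ys = wedge_list zs \<or> wedge_list ys = - wedge_list zs"
proof (induction zs arbitrary: ys)
  case Nil then show ?case by simp
next
  case (Cons z zs)
  then have "z \<in> set ys" by simp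
  then obtain xs ys' where ys: "ys = xs @ z # ys'" by (meson split_list)
  have d: "distinct (xs @ ys')" "set (xs @ ys') = set zs" using Cons.prems ys by auto
  have ih: "wedge_list (xs @ ys') = wedge_list zs \<or> wedge_list (xs @ ys') = - wedge_list zs"
    using Cons.IH[OF d(1) _ d(2)] Cons.prems by (simp add: fun_Compl_def)
  have ih2: "wedge_list (z # xs @ ys') = wedge_list (z # zs) \<or> wedge_list (z # xs @ ys') = - wedge_list (z # zs)"
    using ih by (auto simp: wedge_neg_r)
  show ?case using wl_move[of xs z ys'] ih2 ys by auto
qed

lemma wl_units_nz: "distinct js \<Longrightarrow> wedge_list (map unitv js) (set js) \<noteq> (0::'a::field)"
proof (induction js)
  case Nil then show ?case by simp
next
  case (Cons j js)
  let ?K = "set (j # js)"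
  have "wedge_list (map unitv (j # js)) ?K
     = (\<Sum>i\<in>?K. sg i ?K * unitv j i * wedge_list (map unitv js) (?K - {i}) :: 'a)"
    by (simp add: wedge_vec)
  also have "\<dots> = sg j ?K * wedge_list (map unitv js) (?K - {j})"
    by (subst sum.remove[of _ j]) (auto simp: unitv_def)
  also have "?K - {j} = set js" using Cons.prems by auto
  finally show ?case using Cons sg_nz by simp
qed

lemma wl_support:
  "\<forall>v\<in>set vs. \<forall>i. v i \<noteq> 0 \<longrightarrow> i \<in> A \<Longrightarrow> wedge_list vs K \<noteq> 0 \<Longrightarrow>
   finite K \<and> K \<subseteq> A \<and> card K = length vs"
proof (induction vs arbitrary: K)
  case Nil then show ?case by (simp split: if_splits)
next
  case (Cons v vs)
  have fin: "finite K"
  proof (rule ccontr)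
    assume "infinite K"
    then have "wedge_list (v # vs) K = 0" by (simp add: wedge_vec)
    then show False using Cons.prems(2) by simp
  qed
  then have "(\<Sum>j\<in>K. sg j K * v j * wedge_list vs (K - {j})) \<noteq> 0"
    using Cons.prems(2) by (simp add: wedge_vec)
  then obtain j where j: "j \<in> K" "sg j K * v j * wedge_list vs (K - {j}) \<noteq> 0"
    by (rule sum.not_neutral_contains_not_neutral)
  from j(2) have vj: "v j \<noteq> 0" by auto
  from j(2) have wj: "wedge_list vs (K - {j}) \<noteq> 0" by auto
  have pv: "\<forall>v\<in>set vs. \<forall>i. v i \<noteq> 0 \<longrightarrow> i \<in> A" using Cons.prems(1) by simp
  have ih: "finite (K - {j}) \<and> K - {j} \<subseteq> A \<and> card (K - {j}) = length vs"
    by (rule Cons.IH[OF pv wj])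
  have jA: "j \<in> A" using Cons.prems(1) vj by auto
  have cK: "card K = Suc (card (K - {j}))" using card.remove[OF fin j(1)] .
  have "K \<subseteq> A" using ih jA by blast
  moreover have "card K = length (v # vs)" using ih cK by simp
  ultimately show ?case using fin by simp
qed

lemma wedge_vec_sum:
  "wedge (vec_ext (\<Sum>b\<in>B. fscale (c b) b)) \<beta> = (\<Sum>b\<in>B. fscale (c b) (wedge (vec_ext b) \<beta>))"
proof (induction B rule: infinite_finite_induct)
  case (infinite A)
  then show ?case by (simp only: sum.infinite[OF infinite] vec_ext_zero wedge_zero_l)
next
  case empty
  then show ?case by (simp only: sum.empty vec_ext_zero wedge_zero_l)
next
  case (insert x F)
  show ?case by (simp only: sum.insert[OF insert.hyps(1,2)] vec_ext_add wedge_add_l vec_ext_scale wedge_scale_l insert.IH)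
qed

lemma wl_span:
  assumes B: "finite B"
  shows "set xs \<subseteq> fs.span B \<Longrightarrow>
    wedge_list xs \<in> fs.span {wedge_list ys | ys. set ys \<subseteq> B \<and> length ys = length xs}"
proof (induction xs)
  case Nil
  have "wedge_list [] \<in> {wedge_list ys | ys. set ys \<subseteq> B \<and> length ys = length ([] :: (nat \<Rightarrow> 'a) list)}"
    unfolding mem_Collect_eq by (intro exI[of _ "[]"]) simp
  then show ?case by (rule fs.span_base)
next
  case (Cons x xs)
  let ?M = "{wedge_list ys | ys. set ys \<subseteq> B \<and> length ys = length xs}"
  let ?M' = "{wedge_list ys | ys. set ys \<subseteq> B \<and> length ys = length (x # xs)}"
  have ih: "wedge_list xs \<in> fs.span ?M" using Cons by simp
  have x: "x \<in> fs.span B" using Cons.prems by simp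
  obtain c where c: "x = (\<Sum>b\<in>B. fscale (c b) b)" using x fs.span_finite[OF B] by auto
  interpret h: module_hom fscale fscale "\<lambda>\<beta>. wedge (vec_ext x) \<beta>" by (rule lin_hom[OF lin_wedge_r])
  have "(\<lambda>\<beta>. wedge (vec_ext x) \<beta>) ` ?M \<subseteq> fs.span ?M'"
  proof
    fix w assume "w \<in> (\<lambda>\<beta>. wedge (vec_ext x) \<beta>) ` ?M"
    then obtain ys where ys: "set ys \<subseteq> B" "length ys = length xs" "w = wedge (vec_ext x) (wedge_list ys)"
      by blast
    have mem: "wedge (vec_ext b) (wedge_list ys) \<in> ?M'" if "b \<in> B" for b
    proof -
      have "set (b # ys) \<subseteq> B" "length (b # ys) = length (x # xs)" using that ys by auto
      moreover have "wedge (vec_ext b) (wedge_list ys) = wedge_list (b # ys)" by simp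
      ultimately show ?thesis unfolding mem_Collect_eq by (intro exI[of _ "b # ys"]) simp
    qed
    have "w = (\<Sum>b\<in>B. fscale (c b) (wedge (vec_ext b) (wedge_list ys)))"
      using ys(3) c wedge_vec_sum by simp
    also have "\<dots> \<in> fs.span ?M'"
      by (intro fs.span_sum fs.span_scale fs.span_base mem)
    finally show "w \<in> fs.span ?M'" .
  qed
  then have "fs.span ((\<lambda>\<beta>. wedge (vec_ext x) \<beta>) ` ?M) \<subseteq> fs.span ?M'"
    by (rule fs.span_minimal) simp
  moreover have "wedge_list (x # xs) \<in> fs.span ((\<lambda>\<beta>. wedge (vec_ext x) \<beta>) ` ?M)"
    unfolding h.span_image by (rule image_eqI[OF _ ih]) simp
  ultimately show ?case by (rule subsetD)
qed

lemma Vsp_coord: "Vsp m = coord {..<m}"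
  by (auto simp: Vsp_def coord_def) (meson not_less)

lemma indep_spans:
  fixes B :: "('i \<Rightarrow> 'k::field) set"
  assumes X: "finite X" and B: "B \<subseteq> coord X" "fs.independent B" "card B = card X"
  shows "coord X \<subseteq> fs.span B"
proof
  fix v :: "'i \<Rightarrow> 'k" assume v: "v \<in> coord X"
  show "v \<in> fs.span B"
  proof (rule ccontr)
    assume nv: "v \<notin> fs.span B"
    have cs: "coord X = fs.span (unitv ` X :: ('i \<Rightarrow> 'k) set)" by (rule coord_span[OF X])
    have finB: "finite B"
      using fs.independent_span_bound[OF finite_imageI[OF X] B(2)] B(1) cs by auto
    have ind: "fs.independent (insert v B)" using fs.independent_insertI[OF nv B(2)] .
    have sub: "insert v B \<subseteq> fs.span (unitv ` X)" using v B(1) cs by auto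
    have "card (insert v B) \<le> card (unitv ` X :: ('i \<Rightarrow> 'k) set)"
      using fs.independent_span_bound[OF finite_imageI[OF X] ind sub] by blast
    also have "\<dots> \<le> card X" by (rule card_image_le[OF X])
    finally have "card (insert v B) \<le> card X" .
    moreover have "v \<notin> B" using nv fs.span_base by blast
    ultimately show False using finB B(3) by simp
  qed
qed



lemma wl_basis_nz:
  assumes dist: "distinct bs" and sub: "set bs \<subseteq> Vsp m" and ind: "fs.independent (set bs)"
    and len: "length bs = m"
  shows "wedge_list bs \<noteq> (0 :: nat set \<Rightarrow> 'a::field)"
proof
  assume z: "wedge_list bs = 0"
  let ?B = "set bs"
  have cardB: "card ?B = m" using dist len distinct_card by metis
  have sp: "Vsp m \<subseteq> fs.span ?B"
    using indep_spans[of "{..<m}" ?B] sub ind cardB unfolding Vsp_coord by simp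
  let ?es = "map unitv [0..<m] :: (nat \<Rightarrow> 'a) list"
  have "set ?es \<subseteq> Vsp m" by (auto simp: Vsp_def unitv_def)
  then have "set ?es \<subseteq> fs.span ?B" using sp by blast
  then have "wedge_list ?es \<in> fs.span {wedge_list ys | ys. set ys \<subseteq> ?B \<and> length ys = length ?es}"
    by (rule wl_span[OF finite_set])
  moreover have "{wedge_list ys | ys. set ys \<subseteq> ?B \<and> length ys = length ?es} \<subseteq> {0}"
  proof clarify
    fix ys :: "(nat \<Rightarrow> 'a) list" assume ys: "set ys \<subseteq> ?B" "length ys = length ?es"
    show "wedge_list ys = 0"
    proof (cases "distinct ys")
      case True
      then have "card (set ys) = m" using ys(2) distinct_card by fastforce
      then have "set ys = ?B" using card_subset_eq[OF finite_set ys(1)] cardB by simp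
      then have "wedge_list ys = wedge_list bs \<or> wedge_list ys = - wedge_list bs"
        using wl_perm[OF True dist] by blast
      then show ?thesis using z by auto
    next
      case False
      then show ?thesis by (rule wl_nondistinct)
    qed
  qed
  ultimately have "wedge_list ?es \<in> fs.span {0}" using fs.span_mono by blast
  then have "wedge_list ?es = 0" by simp
  moreover have "wedge_list ?es (set [0..<m]) \<noteq> 0" by (rule wl_units_nz) simp
  ultimately show False by (simp add: zero_fun_def)
qed

lemma wl_indep_nz:
  assumes dist: "distinct vs" and sub: "set vs \<subseteq> Vsp m" and ind: "fs.independent (set vs)"
  shows "wedge_list vs \<noteq> (0 :: nat set \<Rightarrow> 'a::field)"
proof
  assume z: "wedge_list vs = 0"
  obtain B where B: "set vs \<subseteq> B" "B \<subseteq> Vsp m" "fs.independent B" "Vsp m \<subseteq> fs.span B"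
    using fs.maximal_independent_subset_extend[OF sub ind] by blast
  have cs: "Vsp m = fs.span (unitv ` {..<m} :: (nat \<Rightarrow> 'a) set)"
    unfolding Vsp_coord by (rule coord_span) simp
  have finB: "finite B"
    using fs.independent_span_bound[OF finite_imageI[of "{..<m}" unitv] B(3)] B(2) cs by auto
  have cardB: "card B = m"
  proof -
    have "fs.dim (Vsp m :: (nat \<Rightarrow> 'a) set) = m" unfolding Vsp_coord by (subst dim_coord) simp_all
    then show ?thesis using fs.basis_card_eq_dim[OF B(2) B(4) B(3)] by simp
  qed
  obtain us where us: "distinct us" "set us = B - set vs"
    using finite_distinct_list[of "B - set vs"] finB by auto
  have d: "distinct (us @ vs)" using us dist by auto
  have s: "set (us @ vs) = B" using us B(1) by auto
  then have l: "length (us @ vs) = m" using cardB distinct_card[OF d] by simp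
  have "wedge_list (us @ vs) \<noteq> (0 :: nat set \<Rightarrow> 'a)"
    by (rule wl_basis_nz[OF d _ _ l]) (use s B in auto)
  moreover have "wedge_list (us @ vs) = 0" by (rule wl_append_zero[OF z])
  ultimately show False by simp
qed



lemma ext_sign_nz: "ext_sign I J \<noteq> (0::'a::field)"
  by (simp add: ext_sign_def)

lemma wedge_single:
  assumes C: "finite C" and I: "I \<subseteq> C" and a: "\<And>K. K \<noteq> I \<Longrightarrow> a K = 0"
  shows "wedge a b C = ext_sign I (C - I) * a I * b (C - I)"
proof -
  have "wedge a b C = (\<Sum>K\<in>Pow C. ext_sign K (C - K) * a K * b (C - K))"
    using C by (simp add: wedge_def)
  also have "\<dots> = ext_sign I (C - I) * a I * b (C - I) + (\<Sum>K\<in>Pow C - {I}. ext_sign K (C - K) * a K * b (C - K))"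
    using C I by (simp add: sum.remove)
  also have "(\<Sum>K\<in>Pow C - {I}. ext_sign K (C - K) * a K * b (C - K)) = 0"
    by (rule sum.neutral) (use a in auto)
  finally show ?thesis by simp
qed

lemma ext_pow_coord: "ext_pow m k = coord {I. I \<subseteq> {..<m} \<and> card I = k}"
  by (auto simp: ext_pow_def coord_def)

lemma finite_ksets: "finite {I. I \<subseteq> {..<(m::nat)} \<and> card I = k}"
  by (rule finite_subset[of _ "Pow {..<m}"]) auto

lemma unitv_single: "K \<noteq> I \<Longrightarrow> unitv I K = 0"
  by (simp add: unitv_def)

lemma compl_kset:
  assumes "J \<subseteq> {..<m}" "card J = m - l" "l \<le> m"
  shows "{..<m} - J \<subseteq> {..<m}" "card ({..<m} - J) = l" "{..<m} - ({..<m} - J) = J"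
proof -
  show "{..<m} - J \<subseteq> {..<m}" by auto
  show "card ({..<m} - J) = l" using assms card_Diff_subset[OF finite_subset[OF assms(1)] assms(1)] by simp
  show "{..<m} - ({..<m} - J) = J" using assms(1) by auto
qed



theorem lemma5p1:
  fixes m l n :: nat
    and W :: "nat \<Rightarrow> (nat \<Rightarrow> 'a::{finite,field}) set"
    and bas :: "nat \<Rightarrow> (nat \<Rightarrow> 'a) list"
    and D :: "(nat \<Rightarrow> 'a) set"
  assumes "1 \<le> l" and "l \<le> m"
    and "bij_betw W {..<n}
           {S. S \<subseteq> Vsp m \<and> module.subspace fscale S \<and> vector_space.dim fscale S = l}"
    and "\<forall>i<n. length (bas i) = l \<and> distinct (bas i) \<and> set (bas i) \<subseteq> W i
               \<and> \<not> module.dependent fscale (set (bas i))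
               \<and> module.span fscale (set (bas i)) = W i"
    and "module.subspace fscale D"
    and "D \<subseteq> tau m n (\<lambda>i. wedge_list (bas i)) ` ext_pow m (m - l)"
  shows "let rep = (\<lambda>i. wedge_list (bas i));
             T = rep ` {..<n};
             \<D> = {\<omega> \<in> ext_pow m (m - l). tau m n rep \<omega> \<in> D};
             \<E> = {\<omega>' \<in> ext_pow m l. \<forall>\<omega>\<in>\<D>. top_coeff m (wedge \<omega>' \<omega>) = 0}
         in module.subspace fscale \<E> \<and> \<E> \<subseteq> ext_pow m l
            \<and> vector_space.dim fscale (ext_pow m l :: (nat set \<Rightarrow> 'a) set) - vector_space.dim fscale \<E>
                = vector_space.dim fscale D
            \<and> supp_size n D = n - card (\<E> \<inter> T)"
proof -
  note lm = assms(2) and bij = assms(3) and basA = assms(4) and Dsub = assms(5)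
  define rep where "rep = (\<lambda>i. wedge_list (bas i))"
  define T where "T = rep ` {..<n}"
  define DD where "DD = {\<omega> \<in> ext_pow m (m - l). tau m n rep \<omega> \<in> D}"
  define E where "E = {\<omega>' \<in> ext_pow m l. \<forall>\<omega>\<in>DD. top_coeff m (wedge \<omega>' \<omega>) = 0}"
  define L where "L = {I. I \<subseteq> {..<m} \<and> card I = l}"
  define M where "M = {J. J \<subseteq> {..<m} \<and> card J = m - l}"
  have Dtau: "D \<subseteq> tau m n rep ` ext_pow m (m - l)" using assms(6) by (simp add: rep_def)
  have finL: "finite L" unfolding L_def by (rule finite_ksets)
  have finM: "finite M" unfolding M_def by (rule finite_ksets)
  have P: "ext_pow m l = (coord L :: (nat set \<Rightarrow> 'a) set)" unfolding L_def by (rule ext_pow_coord)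
  have Q: "ext_pow m (m - l) = (coord M :: (nat set \<Rightarrow> 'a) set)" unfolding M_def by (rule ext_pow_coord)
  define p :: "(nat set \<Rightarrow> 'a) \<Rightarrow> (nat set \<Rightarrow> 'a) \<Rightarrow> 'a" where "p a b = top_coeff m (wedge a b)" for a b
  have tau_eq: "tau m n rep \<omega> i = p (rep i) \<omega>" if "i < n" for \<omega> i
    using that by (simp add: tau_def p_def)
  have pl1: "\<And>x1 x2 y. p (x1 + x2) y = p x1 y + p x2 y" by (simp add: p_def top_coeff_def wedge_add_l)
  have pl2: "\<And>c x y. p (fscale c x) y = c * p x y" by (simp add: p_def top_coeff_def wedge_scale_l fscale_apply)
  have pr1: "\<And>x y1 y2. p x (y1 + y2) = p x y1 + p x y2" by (simp add: p_def top_coeff_def wedge_add_r)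
  have pr2: "\<And>c x y. p x (fscale c y) = c * p x y" by (simp add: p_def top_coeff_def wedge_scale_r fscale_apply)
  have p0: "p 0 y = 0" for y by (simp add: p_def top_coeff_def wedge_zero_l)

  have Wimg: "W ` {..<n} = {S. S \<subseteq> Vsp m \<and> fs.subspace S \<and> fs.dim S = l}"
    using bij by (simp add: bij_betw_def)
  have Winj: "inj_on W {..<n}" using bij by (simp add: bij_betw_def)
  have WV: "W i \<subseteq> Vsp m" if "i < n" for i using Wimg that by blast
  have bas: "length (bas i) = l" "distinct (bas i)" "set (bas i) \<subseteq> W i"
     "fs.independent (set (bas i))" "fs.span (set (bas i)) = W i" if "i < n" for i
    using basA that by auto

  have repP: "rep i \<in> ext_pow m l" if "i < n" for i
  proof -
    have sv: "\<forall>v\<in>set (bas i). \<forall>j. v j \<noteq> 0 \<longrightarrow> j \<in> {..<m}"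
      using bas(3)[OF that] WV[OF that] by (auto simp: Vsp_def not_le[symmetric])
    show ?thesis unfolding ext_pow_def rep_def using wl_support[OF sv] bas(1)[OF that] by auto
  qed
  have repnz: "rep i \<noteq> 0" if "i < n" for i
    unfolding rep_def by (rule wl_indep_nz) (use bas[OF that] WV[OF that] in auto)

  have coordrep: "\<exists>i<n. (\<forall>K. K \<noteq> I \<longrightarrow> rep i K = 0) \<and> rep i I \<noteq> 0" if I: "I \<in> L" for I
  proof -
    have IC: "I \<subseteq> {..<m}" "card I = l" "finite I" using I unfolding L_def by (auto intro: finite_subset)
    let ?S = "coord I :: (nat \<Rightarrow> 'a) set"
    have "?S \<subseteq> Vsp m" using IC(1) by (auto simp: Vsp_def coord_def)
    moreover have "fs.subspace ?S" by (rule subspace_coord)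
    moreover have "fs.dim ?S = l" using dim_coord[OF IC(3)] IC(2) by simp
    ultimately have "?S \<in> W ` {..<n}" using Wimg by blast
    then obtain i where i: "i < n" "W i = ?S" by auto
    have sv: "\<forall>v\<in>set (bas i). \<forall>j. v j \<noteq> 0 \<longrightarrow> j \<in> I"
      using bas(3)[OF i(1)] i(2) by (auto simp: coord_def)
    have supp: "rep i K = 0" if "K \<noteq> I" for K
    proof (rule ccontr)
      assume "rep i K \<noteq> 0"
      then have "finite K \<and> K \<subseteq> I \<and> card K = length (bas i)"
        using wl_support[OF sv] unfolding rep_def by blast
      then have "K = I" using card_subset_eq[OF IC(3)] IC(2) bas(1)[OF i(1)] by auto
      then show False using that by simp
    qed
    have "rep i I \<noteq> 0"
    proof
      assume z: "rep i I = 0"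
      have "rep i = 0"
      proof
        fix K show "rep i K = 0 K" using z supp by (cases "K = I") auto
      qed
      then show False using repnz[OF i(1)] by simp
    qed
    then show ?thesis using i(1) supp by blast
  qed

  have taunz: "\<omega> = 0" if w: "\<omega> \<in> ext_pow m (m - l)" "\<forall>i<n. p (rep i) \<omega> = 0" for \<omega>
  proof
    fix J show "\<omega> J = 0 J"
    proof (cases "J \<in> M")
      case True
      then have J: "J \<subseteq> {..<m}" "card J = m - l" unfolding M_def by auto
      note cc = compl_kset[OF J lm]
      have "{..<m} - J \<in> L" using cc unfolding L_def by auto
      then obtain i where i: "i < n" "\<forall>K. K \<noteq> {..<m} - J \<longrightarrow> rep i K = 0" "rep i ({..<m} - J) \<noteq> 0"
        using coordrep by blast
      have "p (rep i) \<omega> = ext_sign ({..<m} - J) ({..<m} - ({..<m} - J)) * rep i ({..<m} - J) * \<omega> ({..<m} - ({..<m} - J))"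
        unfolding p_def top_coeff_def by (rule wedge_single) (use i cc in auto)
      then have "ext_sign ({..<m} - J) J * rep i ({..<m} - J) * \<omega> J = 0" using w(2) i(1) cc(3) by simp
      moreover have "ext_sign ({..<m} - J) J \<noteq> (0::'a)" by (rule ext_sign_nz)
      ultimately show ?thesis using i(3) by simp
    next
      case False then show ?thesis using w(1) Q by (auto simp: coord_def)
    qed
  qed

  have unz: "y = 0" if y: "y \<in> DD" "\<forall>u\<in>unitv ` L. p u y = 0" for y
  proof
    fix J show "y J = 0 J"
    proof (cases "J \<in> M")
      case True
      then have J: "J \<subseteq> {..<m}" "card J = m - l" unfolding M_def by auto
      note cc = compl_kset[OF J lm]
      have IL: "{..<m} - J \<in> L" using cc unfolding L_def by auto
      have "p (unitv ({..<m} - J)) y = ext_sign ({..<m} - J) ({..<m} - ({..<m} - J)) * unitv ({..<m} - J) ({..<m} - J) * y ({..<m} - ({..<m} - J))"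
        unfolding p_def top_coeff_def by (rule wedge_single) (use cc in \<open>auto simp: unitv_def\<close>)
      then have "ext_sign ({..<m} - J) J * y J = 0" using y(2) IL cc(3) by (simp add: unitv_def)
      moreover have "ext_sign ({..<m} - J) J \<noteq> (0::'a)" by (rule ext_sign_nz)
      ultimately show ?thesis by simp
    next
      case False then show ?thesis using y(1) Q by (auto simp: coord_def DD_def)
    qed
  qed

  have ltau: "lin (tau m n rep)"
    unfolding lin_def tau_def top_coeff_def by (auto simp: fun_eq_iff wedge_add_r wedge_scale_r fscale_apply)
  interpret ht: module_hom fscale fscale "tau m n rep" by (rule lin_hom[OF ltau])
  have DDsub: "fs.subspace DD"
  proof -
    have "DD = ext_pow m (m - l) \<inter> {x. tau m n rep x \<in> D}" unfolding DD_def by auto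
    moreover have "fs.subspace (ext_pow m (m - l) :: (nat set \<Rightarrow> 'a) set)" using subspace_coord Q by simp
    moreover have "fs.subspace {x. tau m n rep x \<in> D}" by (rule ht.subspace_linear_preimage[OF Dsub])
    ultimately show ?thesis using fs.subspace_inter by simp
  qed
  have DDspan: "DD \<subseteq> fs.span (unitv ` M)" using Q coord_span[OF finM] unfolding DD_def by auto
  have RN: "fs.dim DD = fs.dim {x\<in>DD. tau m n rep x = 0} + fs.dim (tau m n rep ` DD)"
    by (rule rank_nullity[OF ltau DDsub finite_imageI[OF finM] DDspan])
  have ker0: "{x\<in>DD. tau m n rep x = 0} \<subseteq> fs.span {}"
  proof clarify
    fix x assume x: "x \<in> DD" "tau m n rep x = 0"
    have "x = 0"
    proof (rule taunz)
      show "x \<in> ext_pow m (m - l)" using x(1) DD_def by simp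
      show "\<forall>i<n. p (rep i) x = 0"
      proof (intro allI impI)
        fix i assume "i < n"
        then have "p (rep i) x = tau m n rep x i" using tau_eq by simp
        also have "\<dots> = 0" using x(2) by simp
        finally show "p (rep i) x = 0" .
      qed
    qed
    then show "x \<in> fs.span {}" by (simp add: fs.span_zero)
  qed
  have "fs.dim {x\<in>DD. tau m n rep x = 0} \<le> card ({} :: (nat set \<Rightarrow> 'a) set)"
    by (rule fs.dim_le_card[OF ker0]) simp
  then have dk: "fs.dim {x\<in>DD. tau m n rep x = 0} = 0" by simp
  have timg: "tau m n rep ` DD = D"
  proof
    show "tau m n rep ` DD \<subseteq> D" unfolding DD_def by auto
    show "D \<subseteq> tau m n rep ` DD"
    proof
      fix x assume x: "x \<in> D"
      then obtain \<omega> where "\<omega> \<in> ext_pow m (m - l)" "x = tau m n rep \<omega>" using Dtau by blast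
      then show "x \<in> tau m n rep ` DD" using x unfolding DD_def by blast
    qed
  qed
  have dimDD: "fs.dim DD = fs.dim D" using RN dk timg by simp

  have E_alt: "E = {x \<in> ext_pow m l. \<forall>\<omega>\<in>DD. p x \<omega> = 0}" by (simp add: E_def p_def)
  have spL: "fs.span (unitv ` L) = (ext_pow m l :: (nat set \<Rightarrow> 'a) set)" unfolding P by (rule coord_span[OF finL, symmetric])
  have dual: "fs.dim (fs.span (unitv ` L :: (nat set \<Rightarrow> 'a) set)) = fs.dim DD + fs.dim {x\<in>fs.span (unitv ` L). \<forall>z\<in>DD. p x z = 0}"
  proof (rule duality[where U="unitv ` L" and BY="unitv ` M"])
    show "finite (unitv ` L :: (nat set \<Rightarrow> 'a) set)" using finL by simp
    show "finite (unitv ` M :: (nat set \<Rightarrow> 'a) set)" using finM by simp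
  qed (use pl1 pl2 pr1 pr2 DDsub DDspan unz in auto)
  have dimE: "fs.dim (ext_pow m l :: (nat set \<Rightarrow> 'a) set) - fs.dim E = fs.dim D"
    using dual unfolding spL E_alt[symmetric] dimDD by simp

  have PS: "fs.subspace (ext_pow m l :: (nat set \<Rightarrow> 'a) set)" using subspace_coord P by simp
  have Esub: "fs.subspace E"
    unfolding fs.subspace_def E_alt
    using fs.subspace_0[OF PS] fs.subspace_add[OF PS] fs.subspace_scale[OF PS] by (auto simp: p0 pl1 pl2)
  have EP: "E \<subseteq> ext_pow m l" unfolding E_def by auto

  have Wchar: "W i = {v \<in> Vsp m. wedge (vec_ext v) (rep i) = 0}" if "i < n" for i
  proof
    show "W i \<subseteq> {v \<in> Vsp m. wedge (vec_ext v) (rep i) = 0}"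
    proof
      fix v assume v: "v \<in> W i"
      then have "v \<in> fs.span (set (bas i))" using bas(5)[OF that] by simp
      then have "wedge_list (v # bas i) = 0" by (rule wl_span_zero)
      then show "v \<in> {v \<in> Vsp m. wedge (vec_ext v) (rep i) = 0}" using v WV[OF that] rep_def by auto
    qed
    show "{v \<in> Vsp m. wedge (vec_ext v) (rep i) = 0} \<subseteq> W i"
    proof clarify
      fix v assume v: "v \<in> Vsp m" "wedge (vec_ext v) (rep i) = 0"
      show "v \<in> W i"
      proof (rule ccontr)
        assume nv: "v \<notin> W i"
        then have ns: "v \<notin> fs.span (set (bas i))" using bas(5)[OF that] by simp
        then have "v \<notin> set (bas i)" using fs.span_base by blast
        then have d: "distinct (v # bas i)" using bas(2)[OF that] by simp
        have ind: "fs.independent (set (v # bas i))" using fs.independent_insertI[OF ns bas(4)[OF that]] by simp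
        have sub: "set (v # bas i) \<subseteq> Vsp m" using v(1) bas(3)[OF that] WV[OF that] by auto
        have "wedge_list (v # bas i) \<noteq> (0 :: nat set \<Rightarrow> 'a)" by (rule wl_indep_nz[OF d sub ind])
        then show False using v(2) rep_def by simp
      qed
    qed
  qed
  have injrep: "inj_on rep {..<n}"
  proof (rule inj_onI)
    fix i j assume ij: "i \<in> {..<n}" "j \<in> {..<n}" "rep i = rep j"
    then have "W i = W j" using Wchar by simp
    then show "i = j" using inj_onD[OF Winj _ ij(1,2)] by simp
  qed
  have iff: "rep i \<in> E \<longleftrightarrow> (\<forall>x\<in>D. x i = 0)" if "i < n" for i
  proof -
    have "rep i \<in> E \<longleftrightarrow> (\<forall>\<omega>\<in>DD. p (rep i) \<omega> = 0)" using repP[OF that] unfolding E_alt by simp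
    also have "\<dots> \<longleftrightarrow> (\<forall>\<omega>\<in>DD. tau m n rep \<omega> i = 0)" using tau_eq[OF that] by simp
    also have "\<dots> \<longleftrightarrow> (\<forall>x\<in>D. x i = 0)" unfolding timg[symmetric] by simp
    finally show ?thesis .
  qed
  have set1: "{i \<in> {..<n}. \<exists>x\<in>D. x i \<noteq> 0} = {..<n} - {i\<in>{..<n}. rep i \<in> E}" using iff by auto
  have set2: "E \<inter> T = rep ` {i\<in>{..<n}. rep i \<in> E}" unfolding T_def by auto
  have c1: "card ({..<n} - {i\<in>{..<n}. rep i \<in> E}) = n - card {i\<in>{..<n}. rep i \<in> E}"
    by (subst card_Diff_subset) auto
  have c2: "card (rep ` {i\<in>{..<n}. rep i \<in> E}) = card {i\<in>{..<n}. rep i \<in> E}"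
    by (rule card_image[OF inj_on_subset[OF injrep]]) auto
  have supp: "supp_size n D = n - card (E \<inter> T)"
    unfolding supp_size_def set1 set2 c1 c2 ..
  have main: "fs.subspace E \<and> E \<subseteq> ext_pow m l
      \<and> fs.dim (ext_pow m l :: (nat set \<Rightarrow> 'a) set) - fs.dim E = fs.dim D
      \<and> supp_size n D = n - card (E \<inter> T)"
    using Esub EP dimE supp by blast
  from main show ?thesis by (simp only: Let_def E_def DD_def T_def rep_def)
qed


end
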